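(* Let $\Gamma=(V,E)$ be a graph, $M_v$ ($v\in V$) monoids and $M=\Gamma_{v\in V}M_v$. Then each $M_v$ is a unitary submonoid of $M$: for $c\in M_v$ and $a\in M$, if $ac\in M_v$ then $a\in M_v$, and if $ca\in M_v$ then $a\in M_v$.
   Context: A graph $\Gamma=(V,E)$ has vertex set $V$ and irreflexive symmetric edge relation $E$. The graph product $\Gamma_{v\in V}M_v$ of pairwise disjoint monoids $M_v$ is the quotient of their free product by the congruence generated by all pairs $(mn,nm)$ with $m\in M_u$, $n\in M_v$, $(u,v)\in E$. The natural map from each $M_v$ into the graph product is injective, and $M_v$ is identified with its image. *)

theory Defs
  imports "HOL-Algebra.Group"
begin

text \<open>The vertex set is the universe of the type 'v,
the graph is given by a symmetric irreflexive relation E, and the vertex monoids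
are HOL-Algebra monoids M v.  Elements of the free product are represented by words
over the disjoint union of the carriers, i.e. lists of tagged letters (v, m) with
m in the carrier of M v (the tag v makes the monoids pairwise disjoint).\<close>

definition gp_word :: "('v \<Rightarrow> 'a monoid) \<Rightarrow> ('v \<times> 'a) list \<Rightarrow> bool" where
  "gp_word M w \<longleftrightarrow> (\<forall>(v, m) \<in> set w. m \<in> carrier (M v))"

inductive gp_eq :: "('v \<Rightarrow> 'a monoid) \<Rightarrow> ('v \<Rightarrow> 'v \<Rightarrow> bool)
    \<Rightarrow> ('v \<times> 'a) list \<Rightarrow> ('v \<times> 'a) list \<Rightarrow> bool"
  for M E where
  gp_refl: "gp_word M w \<Longrightarrow> gp_eq M E w w"
| gp_sym: "gp_eq M E w w' \<Longrightarrow> gp_eq M E w' w"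
| gp_trans: "gp_eq M E w w' \<Longrightarrow> gp_eq M E w' w'' \<Longrightarrow> gp_eq M E w w''"
| gp_ctxt: "gp_eq M E w w' \<Longrightarrow> gp_word M p \<Longrightarrow> gp_word M q
      \<Longrightarrow> gp_eq M E (p @ w @ q) (p @ w' @ q)"
| gp_unit: "gp_eq M E [(v, \<one>\<^bsub>M v\<^esub>)] []"
| gp_mult: "a \<in> carrier (M v) \<Longrightarrow> b \<in> carrier (M v)
      \<Longrightarrow> gp_eq M E [(v, a), (v, b)] [(v, a \<otimes>\<^bsub>M v\<^esub> b)]"
| gp_comm: "E u v \<Longrightarrow> a \<in> carrier (M u) \<Longrightarrow> b \<in> carrier (M v)
      \<Longrightarrow> gp_eq M E [(u, a), (v, b)] [(v, b), (u, a)]"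

definition in_vertex_monoid :: "('v \<Rightarrow> 'a monoid) \<Rightarrow> ('v \<Rightarrow> 'v \<Rightarrow> bool) \<Rightarrow> 'v
    \<Rightarrow> ('v \<times> 'a) list \<Rightarrow> bool" where
  "in_vertex_monoid M E v w \<longleftrightarrow> (\<exists>m \<in> carrier (M v). gp_eq M E w [(v, m)])"

end

theory Submission
  imports Defs
begin

locale gpl =
  fixes M :: "'v \<Rightarrow> 'a monoid" and E :: "'v \<Rightarrow> 'v \<Rightarrow> bool"
  assumes mon: "\<And>v. monoid (M v)"
    and Esym: "\<And>u v. E u v \<Longrightarrow> E v u"
    and Eirr: "\<And>v. \<not> E v v"
begin

fun acc :: "'v \<Rightarrow> ('v \<times> 'a) list \<Rightarrow> bool" where
  "acc u [] = False"
| "acc u ((w,y)#r) = (w = u \<or> (E u w \<and> acc u r))"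

fun red :: "('v \<times> 'a) list \<Rightarrow> bool" where
  "red [] = True"
| "red ((u,x)#r) = (x \<in> carrier (M u) \<and> x \<noteq> \<one>\<^bsub>M u\<^esub> \<and> \<not> acc u r \<and> red r)"

fun ins :: "'v \<Rightarrow> 'a \<Rightarrow> ('v \<times> 'a) list \<Rightarrow> ('v \<times> 'a) list" where
  "ins u x [] = [(u,x)]"
| "ins u x ((w,y)#r) = (if w = u then (if x \<otimes>\<^bsub>M u\<^esub> y = \<one>\<^bsub>M u\<^esub> then r else (u, x \<otimes>\<^bsub>M u\<^esub> y)#r)
     else if E u w then (w,y) # ins u x r else (u,x)#(w,y)#r)"

fun act :: "('v \<times> 'a) \<Rightarrow> ('v \<times> 'a) list \<Rightarrow> ('v \<times> 'a) list" where
  "act (u,x) r = (if x = \<one>\<^bsub>M u\<^esub> then r else ins u x r)"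

definition acts :: "('v \<times> 'a) list \<Rightarrow> ('v \<times> 'a) list \<Rightarrow> ('v \<times> 'a) list" where
  "acts w r = foldr act w r"

inductive sw :: "('v \<times> 'a) list \<Rightarrow> ('v \<times> 'a) list \<Rightarrow> bool" where
  "E u w \<Longrightarrow> sw (p @ (u,a)#(w,b)#q) (p @ (w,b)#(u,a)#q)"

abbreviation teq where "teq \<equiv> sw\<^sup>*\<^sup>*"

lemma sw_sym: "sw s t \<Longrightarrow> sw t s"
  by (induction rule: sw.induct) (auto intro: sw.intros Esym)

lemma teq_sym: "teq s t \<Longrightarrow> teq t s"
  by (induction rule: rtranclp_induct) (auto intro: sw_sym converse_rtranclp_into_rtranclp)

lemma sw_cons: "sw s t \<Longrightarrow> sw (x#s) (x#t)"
proof (induction rule: sw.induct)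
  case (1 u w p a b q) then show ?case using sw.intros[of u w "x#p" a b q] by simp
qed

lemma teq_cons: "teq s t \<Longrightarrow> teq (x#s) (x#t)"
  by (induction rule: rtranclp_induct) (auto intro: sw_cons rtranclp.rtrancl_into_rtrancl)

lemma sw_head: "E u w \<Longrightarrow> teq ((u,a)#(w,b)#q) ((w,b)#(u,a)#q)"
  using sw.intros[of u w "[]" a b q] by auto

lemma sw_mset: "sw s t \<Longrightarrow> set s = set t \<and> length s = length t"
  by (induction rule: sw.induct) auto

lemma teq_mset: "teq s t \<Longrightarrow> set s = set t \<and> length s = length t"
  by (induction rule: rtranclp_induct) (auto dest: sw_mset)

lemma acc_sw: "sw s t \<Longrightarrow> acc z s = acc z t"
proof (induction rule: sw.induct)
  case (1 u w p a b q)
  then show ?case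
    by (induction p rule: acc.induct) (auto dest: Esym simp: Eirr)
qed

lemma red_sw: "sw s t \<Longrightarrow> red s = red t"
proof (induction rule: sw.induct)
  case (1 u w p a b q)
  then show ?case
  proof (induction p)
    case Nil
    then show ?case using Eirr[of u] Esym[of u w] by auto
  next
    case (Cons x p)
    obtain z y where x: "x = (z,y)" by force
    have "acc z (p @ (u, a) # (w, b) # q) = acc z (p @ (w, b) # (u, a) # q)"
      using acc_sw[OF sw.intros[OF Cons.prems]] .
    then show ?case using Cons x by auto
  qed
qed

lemma red_teq: "teq s t \<Longrightarrow> red s \<Longrightarrow> red t"
  by (induction rule: rtranclp_induct) (auto dest: red_sw)

lemma acc_ins: "z \<noteq> u \<Longrightarrow> E z u \<Longrightarrow> acc z (ins u x r) = acc z r"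
  by (induction u x r rule: ins.induct) auto

lemma red_ins: "red r \<Longrightarrow> x \<in> carrier (M u) \<Longrightarrow> x \<noteq> \<one>\<^bsub>M u\<^esub> \<Longrightarrow> red (ins u x r)"
proof (induction u x r rule: ins.induct)
  case (1 u x) then show ?case by simp
next
  case (2 u x w y r)
  interpret monoid "M u" by (rule mon)
  show ?case
  proof (cases "w = u")
    case True then show ?thesis using 2 by auto
  next
    case False
    then show ?thesis using 2 acc_ins[of w u x r] Esym[of u w] by auto
  qed
qed

lemma red_act: "red r \<Longrightarrow> x \<in> carrier (M u) \<Longrightarrow> red (act (u,x) r)"
  using red_ins by auto

lemma red_acts: "gp_word M w \<Longrightarrow> red r \<Longrightarrow> red (acts w r)"
  by (induction w) (auto simp: acts_def gp_word_def intro!: red_act)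

lemma ins_sw: "sw s t \<Longrightarrow> teq (ins u x s) (ins u x t)"
proof (induction rule: sw.induct)
  case (1 u1 u2 p a b q)
  then show ?case
  proof (induction p)
    case Nil
    have ne: "u1 \<noteq> u2" using Nil Eirr by auto
    show ?case
    proof (cases "u = u1")
      case True
      then show ?thesis using Nil ne Esym
        by (auto intro: sw_head sw_cons r_into_rtranclp simp: sw_head)
    next
      case f1: False
      show ?thesis
      proof (cases "u = u2")
        case True
        then show ?thesis using Nil ne f1 Esym
          by (auto intro: sw_head sw_cons r_into_rtranclp simp: sw_head)
      next
        case f2: False
        have A: "teq ((u1,a)#(u2,b)#q) ((u2,b)#(u1,a)#q)" using Nil by (rule sw_head)
        show ?thesis
        proof (cases "E u u1"; cases "E u u2")
          assume "E u u1" "E u u2"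
          then show ?thesis using f1 f2 by (simp add: sw_head Nil)
        next
          assume h: "E u u1" "\<not> E u u2"
          have "teq ((u1,a)#(u,x)#(u2,b)#q) ((u,x)#(u1,a)#(u2,b)#q)"
            using h Esym by (simp add: sw_head)
          also have "teq \<dots> ((u,x)#(u2,b)#(u1,a)#q)" using A by (rule teq_cons)
          finally show ?thesis using h f1 f2 by simp
        next
          assume h: "\<not> E u u1" "E u u2"
          have "teq ((u,x)#(u1,a)#(u2,b)#q) ((u,x)#(u2,b)#(u1,a)#q)" using A by (rule teq_cons)
          also have "teq \<dots> ((u2,b)#(u,x)#(u1,a)#q)" using h Esym by (simp add: sw_head)
          finally show ?thesis using h f1 f2 by simp
        next
          assume h: "\<not> E u u1" "\<not> E u u2"
          then show ?thesis using f1 f2 A by (simp add: teq_cons)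
        qed
      qed
    qed
  next
    case (Cons z p)
    obtain w y where z: "z = (w,y)" by force
    have s: "sw (p @ (u1, a) # (u2, b) # q) (p @ (u2, b) # (u1, a) # q)"
      using sw.intros[OF Cons.prems] .
    show ?case using Cons z
      by (auto intro: teq_cons s r_into_rtranclp sw_cons)
  qed
qed

lemma act_sw: "sw s t \<Longrightarrow> teq (act y s) (act y t)"
  by (cases y) (auto intro: ins_sw r_into_rtranclp)

lemma act_teq: "teq s t \<Longrightarrow> teq (act y s) (act y t)"
  by (induction rule: rtranclp_induct) (auto dest: act_sw intro: rtranclp_trans)

lemma acts_teq: "teq s t \<Longrightarrow> teq (acts p s) (acts p t)"
  by (induction p) (auto simp: acts_def intro: act_teq)

lemma ins_comm: "E u w \<Longrightarrow> teq (ins u a (ins w b r)) (ins w b (ins u a r))"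
proof (induction r)
  case Nil
  then show ?case using Esym Eirr[of u] by (auto simp: sw_head)
next
  case (Cons z r)
  obtain z1 y where z: "z = (z1,y)" by force
  have uw: "u \<noteq> w" using Cons Eirr by auto
  show ?case
  proof (cases "z1 = w")
    case True then show ?thesis using z uw Cons.prems Esym by auto
  next
    case f1: False
    show ?thesis
    proof (cases "z1 = u")
      case True then show ?thesis using z uw Cons.prems Esym by auto
    next
      case f2: False
      show ?thesis
        using z uw Cons Esym f1 f2 by (cases "E u z1"; cases "E w z1") (auto intro: teq_cons simp: sw_head)
    qed
  qed
qed

lemma act_comm: "E u w \<Longrightarrow> teq (act (u,a) (act (w,b) r)) (act (w,b) (act (u,a) r))"
  using ins_comm by auto

lemma ins_noacc: "\<not> acc u r \<Longrightarrow> teq (ins u a r) ((u,a)#r)"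
proof (induction r)
  case Nil then show ?case by simp
next
  case (Cons z r)
  obtain w y where z: "z = (w,y)" by force
  show ?case
  proof (cases "E u w")
    case True
    then have "teq (ins u a (z#r)) ((w,y)#(u,a)#r)" using Cons z by (auto intro: teq_cons)
    also have "teq \<dots> ((u,a)#(w,y)#r)" using True Esym by (simp add: sw_head)
    finally show ?thesis using z by simp
  next
    case False then show ?thesis using Cons z by auto
  qed
qed

lemma act_mult: "red r \<Longrightarrow> a \<in> carrier (M u) \<Longrightarrow> b \<in> carrier (M u) \<Longrightarrow>
   teq (act (u,a) (act (u,b) r)) (act (u, a \<otimes>\<^bsub>M u\<^esub> b) r)"
proof -
  interpret monoid "M u" by (rule mon)
  assume rr: "red r" and ab: "a \<in> carrier (M u)" "b \<in> carrier (M u)"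
  show ?thesis
  proof (cases "a = \<one>\<^bsub>M u\<^esub>")
    case True then show ?thesis using ab by auto
  next
    case na: False
    show ?thesis
    proof (cases "b = \<one>\<^bsub>M u\<^esub>")
      case True then show ?thesis using ab by auto
    next
      case nb: False
      have "teq (ins u a (ins u b r)) (act (u, a \<otimes>\<^bsub>M u\<^esub> b) r)" using rr
      proof (induction r)
        case Nil then show ?case using na nb by auto
      next
        case (Cons z r)
        obtain w y where z: "z = (w,y)" by force
        show ?case
        proof (cases "w = u")
          case True
          have y: "y \<in> carrier (M u)" "y \<noteq> \<one>\<^bsub>M u\<^esub>" "\<not> acc u r" using Cons.prems z True by auto
          show ?thesis
          proof (cases "b \<otimes>\<^bsub>M u\<^esub> y = \<one>\<^bsub>M u\<^esub>")
            case by1: True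
            have aeq: "a \<otimes>\<^bsub>M u\<^esub> b \<otimes>\<^bsub>M u\<^esub> y = a" using by1 ab y m_assoc by simp
            show ?thesis
            proof (cases "a \<otimes>\<^bsub>M u\<^esub> b = \<one>\<^bsub>M u\<^esub>")
              case ab1: True
              then have "a = y" using aeq y by simp
              then show ?thesis using z True by1 ab1 ins_noacc[OF y(3)] by simp
            next
              case False
              then show ?thesis using z True by1 aeq na ins_noacc[OF y(3)] by simp
            qed
          next
            case by1: False
            show ?thesis
            proof (cases "a \<otimes>\<^bsub>M u\<^esub> b = \<one>\<^bsub>M u\<^esub>")
              case ab1: True
              have "a \<otimes>\<^bsub>M u\<^esub> (b \<otimes>\<^bsub>M u\<^esub> y) = y" using ab1 ab y m_assoc[symmetric] by simp
              then show ?thesis using z True by1 ab1 y by simp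
            next
              case False
              then show ?thesis using z True by1 ab y m_assoc by simp
            qed
          qed
        next
          case wu: False
          show ?thesis
          proof (cases "E u w")
            case True
            have "red r" using Cons.prems z by simp
            then have "teq (ins u a (ins u b r)) (act (u, a \<otimes>\<^bsub>M u\<^esub> b) r)" by (rule Cons.IH)
            then show ?thesis using z wu True by (cases "a \<otimes>\<^bsub>M u\<^esub> b = \<one>\<^bsub>M u\<^esub>") (auto intro: teq_cons)
          next
            case False
            then show ?thesis using z wu by auto
          qed
        qed
      qed
      then show ?thesis using na nb by simp
    qed
  qed
qed

lemma red_word: "red r \<Longrightarrow> gp_word M r"
  by (induction r rule: red.induct) (auto simp: gp_word_def)

lemma word_app: "gp_word M (p @ q) = (gp_word M p \<and> gp_word M q)"
  by (auto simp: gp_word_def)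

lemma word_cons: "gp_word M (x # q) = (gp_word M [x] \<and> gp_word M q)"
  by (auto simp: gp_word_def)

lemma gp_ctxt': "gp_eq M E w w' \<Longrightarrow> gp_word M p \<Longrightarrow> gp_word M q \<Longrightarrow> gp_eq M E (p @ w @ q) (p @ w' @ q)"
  by (rule gp_ctxt)

lemma sw_gp: "sw s t \<Longrightarrow> gp_word M s \<Longrightarrow> gp_eq M E s t"
proof (induction rule: sw.induct)
  case (1 u w p a b q)
  have c: "a \<in> carrier (M u)" "b \<in> carrier (M w)" "gp_word M p" "gp_word M q"
    using 1(2) by (auto simp: gp_word_def)
  have "gp_eq M E (p @ [(u,a),(w,b)] @ q) (p @ [(w,b),(u,a)] @ q)"
    by (rule gp_ctxt[OF gp_comm[of E u w a M b, OF 1(1) c(1,2)] c(3,4)])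
  then show ?case by simp
qed

lemma sw_word: "sw s t \<Longrightarrow> gp_word M s \<Longrightarrow> gp_word M t"
  using sw_mset by (auto simp: gp_word_def)

lemma teq_gp: "teq s t \<Longrightarrow> gp_word M s \<Longrightarrow> gp_eq M E s t"
proof (induction rule: rtranclp_induct)
  case base then show ?case by (rule gp_refl)
next
  case (step y z)
  have "gp_word M y" using step teq_mset by (auto simp: gp_word_def)
  then show ?case using step by (auto intro: gp_trans sw_gp)
qed

lemma ins_gp: "red r \<Longrightarrow> x \<in> carrier (M u) \<Longrightarrow> gp_eq M E ((u,x)#r) (ins u x r)"
proof (induction u x r rule: ins.induct)
  case (1 u x) then show ?case by (auto intro: gp_refl simp: gp_word_def)
next
  case (2 u x w y r)
  interpret monoid "M u" by (rule mon)
  have wr: "gp_word M r" using 2 red_word by simp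
  have y: "y \<in> carrier (M w)" using 2 by simp
  show ?case
  proof (cases "w = u")
    case True
    have m: "gp_eq M E ([] @ [(u,x),(u,y)] @ r) ([] @ [(u, x \<otimes>\<^bsub>M u\<^esub> y)] @ r)"
      by (rule gp_ctxt[OF gp_mult]) (use 2 y True wr in \<open>auto simp: gp_word_def\<close>)
    have un: "gp_eq M E ([] @ [(u, \<one>\<^bsub>M u\<^esub>)] @ r) ([] @ [] @ r)"
      by (rule gp_ctxt[OF gp_unit]) (use wr in \<open>auto simp: gp_word_def\<close>)
    show ?thesis using m un True by (auto intro: gp_trans)
  next
    case wu: False
    show ?thesis
    proof (cases "E u w")
      case True
      have c: "gp_eq M E ([] @ [(u,x),(w,y)] @ r) ([] @ [(w,y),(u,x)] @ r)"
        by (rule gp_ctxt[OF gp_comm]) (use 2 y True wr in \<open>auto simp: gp_word_def\<close>)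
      have ih: "gp_eq M E ((u,x)#r) (ins u x r)" using 2 wu True by simp
      have d: "gp_eq M E ([(w,y)] @ ((u,x)#r) @ []) ([(w,y)] @ (ins u x r) @ [])"
        by (rule gp_ctxt[OF ih]) (use y in \<open>auto simp: gp_word_def\<close>)
      show ?thesis using c d wu True by (auto intro: gp_trans)
    next
      case False
      then show ?thesis using wu 2 red_word[of r] by (auto intro!: gp_refl simp: gp_word_def)
    qed
  qed
qed

lemma act_gp: "red r \<Longrightarrow> x \<in> carrier (M u) \<Longrightarrow> gp_eq M E ((u,x)#r) (act (u,x) r)"
proof (cases "x = \<one>\<^bsub>M u\<^esub>")
  case True
  assume r: "red r"
  have "gp_eq M E ([] @ [(u, \<one>\<^bsub>M u\<^esub>)] @ r) ([] @ [] @ r)"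
    by (rule gp_ctxt[OF gp_unit]) (use r red_word in \<open>auto simp: gp_word_def\<close>)
  then show ?thesis using True by simp
qed (auto intro: ins_gp)

lemma acts_gp: "gp_word M w \<Longrightarrow> gp_eq M E w (acts w [])"
proof (induction w)
  case Nil then show ?case by (auto intro: gp_refl simp: gp_word_def acts_def)
next
  case (Cons x w)
  obtain u y where x: "x = (u,y)" by force
  have wy: "gp_word M w" "y \<in> carrier (M u)" using Cons x by (auto simp: gp_word_def)
  have rr: "red (acts w [])" using red_acts wy by simp
  have "gp_eq M E ([(u,y)] @ w @ []) ([(u,y)] @ acts w [] @ [])"
    by (rule gp_ctxt[OF Cons.IH[OF wy(1)]]) (use wy in \<open>auto simp: gp_word_def\<close>)
  moreover have "gp_eq M E ((u,y) # acts w []) (act (u,y) (acts w []))" using act_gp rr wy by simp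
  ultimately show ?case using x by (auto simp: acts_def intro: gp_trans)
qed

lemma gp_acts: "gp_eq M E w w' \<Longrightarrow> red r \<Longrightarrow> teq (acts w r) (acts w' r)"
proof (induction arbitrary: r rule: gp_eq.induct)
  case (gp_refl w) then show ?case by simp
next
  case (gp_sym w w') then show ?case using teq_sym by blast
next
  case (gp_trans w w' w'') then show ?case by (meson rtranclp_trans)
next
  case (gp_ctxt w w' p q)
  have "red (acts q r)" using gp_ctxt red_acts by blast
  then have "teq (acts w (acts q r)) (acts w' (acts q r))" using gp_ctxt by blast
  then have "teq (acts p (acts w (acts q r))) (acts p (acts w' (acts q r)))" by (rule acts_teq)
  then show ?case by (simp add: acts_def)
next
  case (gp_unit v) then show ?case by (simp add: acts_def)
next
  case (gp_mult a v b) then show ?case using act_mult by (simp add: acts_def)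
next
  case (gp_comm u v a b) then show ?case using act_comm by (simp add: acts_def)
qed

lemma ins_short: "red r \<Longrightarrow> length (ins v c r) \<le> 1 \<Longrightarrow> (\<forall>(z,y) \<in> set (ins v c r). z = v)
   \<Longrightarrow> r = [] \<or> (\<exists>y. r = [(v,y)])"
proof (cases r)
  case (Cons z r')
  assume rr: "red r" and l: "length (ins v c r) \<le> 1" and s: "\<forall>(z,y) \<in> set (ins v c r). z = v"
  obtain w y where z: "z = (w,y)" by force
  show ?thesis
  proof (cases "w = v")
    case True
    have na: "\<not> acc v r'" using rr Cons z True by simp
    have "r' = []"
    proof (rule ccontr)
      assume "r' \<noteq> []"
      then obtain w2 y2 r'' where r': "r' = (w2,y2)#r''" by (metis list.exhaust surj_pair)
      have "w2 \<noteq> v" using na r' by simp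
      then show False using l s Cons z True r' by (auto split: if_splits)
    qed
    then show ?thesis using Cons z True by simp
  next
    case False
    then show ?thesis using l s Cons z by (auto split: if_splits)
  qed
qed simp

lemma unit_left: "gp_word M a \<Longrightarrow> c \<in> carrier (M v) \<Longrightarrow> in_vertex_monoid M E v ([(v,c)] @ a)
   \<Longrightarrow> in_vertex_monoid M E v a"
proof -
  interpret monoid "M v" by (rule mon)
  assume wa: "gp_word M a" and c: "c \<in> carrier (M v)" and iv: "in_vertex_monoid M E v ([(v,c)] @ a)"
  obtain m where m: "m \<in> carrier (M v)" "gp_eq M E ([(v,c)] @ a) [(v,m)]"
    using iv by (auto simp: in_vertex_monoid_def)
  define r where "r = acts a []"
  have rr: "red r" using red_acts wa by (simp add: r_def)
  have ar: "gp_eq M E a r" using acts_gp wa by (simp add: r_def)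
  have t: "teq (act (v,c) r) (act (v,m) [])"
    using gp_acts[OF m(2), of "[]"] by (simp add: acts_def r_def)
  have short: "length (act (v,c) r) \<le> 1 \<and> (\<forall>(z,y) \<in> set (act (v,c) r). z = v)"
    using teq_mset[OF t] by auto
  have "r = [] \<or> (\<exists>y. r = [(v,y)])"
  proof (cases "c = \<one>\<^bsub>M v\<^esub>")
    case True
    then show ?thesis using short by (cases r) auto
  next
    case False
    then show ?thesis using short ins_short[OF rr, of v c] by simp
  qed
  then show ?thesis
  proof
    assume "r = []"
    then have "gp_eq M E a [(v, \<one>\<^bsub>M v\<^esub>)]" using ar gp_trans[OF _ gp_sym[OF gp_unit[of M E v]]] by auto
    then show ?thesis by (auto simp: in_vertex_monoid_def)
  next
    assume "\<exists>y. r = [(v,y)]"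
    then obtain y where "r = [(v,y)]" by blast
    then show ?thesis using ar rr by (auto simp: in_vertex_monoid_def)
  qed
qed

end

definition opp :: "'a monoid \<Rightarrow> 'a monoid" where
  "opp N = N\<lparr>mult := \<lambda>x y. y \<otimes>\<^bsub>N\<^esub> x\<rparr>"

lemma opp_simps[simp]: "carrier (opp N) = carrier N" "\<one>\<^bsub>opp N\<^esub> = \<one>\<^bsub>N\<^esub>"
   "x \<otimes>\<^bsub>opp N\<^esub> y = y \<otimes>\<^bsub>N\<^esub> x" "opp (opp N) = N"
  by (auto simp: opp_def)

lemma monoid_opp: "monoid N \<Longrightarrow> monoid (opp N)"
  unfolding monoid_def by (auto simp: opp_def)

lemma word_rev: "gp_word (\<lambda>v. opp (M v)) (rev w) = gp_word M w"
  by (auto simp: gp_word_def)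

lemma gp_rev:
  assumes Esym: "\<And>u v. E u v \<Longrightarrow> E v u"
  shows "gp_eq M E w w' \<Longrightarrow> gp_eq (\<lambda>v. opp (M v)) E (rev w) (rev w')"
proof (induction rule: gp_eq.induct)
  case (gp_refl w) then show ?case by (auto intro: gp_eq.gp_refl simp: word_rev)
next
  case (gp_sym w w') then show ?case by (auto intro: gp_eq.gp_sym)
next
  case (gp_trans w w' w'') then show ?case by (auto intro: gp_eq.gp_trans)
next
  case (gp_ctxt w w' p q)
  have "gp_eq (\<lambda>v. opp (M v)) E (rev q @ rev w @ rev p) (rev q @ rev w' @ rev p)"
    by (rule gp_eq.gp_ctxt) (use gp_ctxt in \<open>auto simp: word_rev\<close>)
  then show ?case by simp
next
  case (gp_unit v)
  show ?case using gp_eq.gp_unit[of "\<lambda>v. opp (M v)" E v] by simp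
next
  case (gp_mult a v b)
  show ?case using gp_eq.gp_mult[of b "\<lambda>v. opp (M v)" v a E] gp_mult by simp
next
  case (gp_comm u v a b)
  show ?case using gp_eq.gp_comm[of E v u b "\<lambda>v. opp (M v)" a] gp_comm Esym by simp
qed

theorem corollary1p2:
  fixes M :: "'v \<Rightarrow> 'a monoid" and E :: "'v \<Rightarrow> 'v \<Rightarrow> bool"
  assumes "\<And>v. monoid (M v)"
    and "\<And>u v. E u v \<Longrightarrow> E v u"
    and "\<And>v. \<not> E v v"
    and "v \<in> UNIV" and "c \<in> carrier (M v)" and "gp_word M a"
  shows "(in_vertex_monoid M E v (a @ [(v, c)]) \<longrightarrow> in_vertex_monoid M E v a)
       \<and> (in_vertex_monoid M E v ([(v, c)] @ a) \<longrightarrow> in_vertex_monoid M E v a)"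
proof
  interpret g: gpl M E by (rule gpl.intro) (use assms in auto)
  interpret h: gpl "\<lambda>v. opp (M v)" E by (rule gpl.intro) (use assms monoid_opp in blast)+
  show "in_vertex_monoid M E v ([(v, c)] @ a) \<longrightarrow> in_vertex_monoid M E v a"
    using g.unit_left assms by blast
  show "in_vertex_monoid M E v (a @ [(v, c)]) \<longrightarrow> in_vertex_monoid M E v a"
  proof
    assume "in_vertex_monoid M E v (a @ [(v, c)])"
    then obtain m where m: "m \<in> carrier (M v)" "gp_eq M E (a @ [(v, c)]) [(v,m)]"
      by (auto simp: in_vertex_monoid_def)
    have "gp_eq (\<lambda>v. opp (M v)) E ([(v, c)] @ rev a) [(v,m)]"
      using gp_rev[OF assms(2) m(2)] by simp
    then have "in_vertex_monoid (\<lambda>v. opp (M v)) E v ([(v, c)] @ rev a)"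
      using m(1) by (auto simp: in_vertex_monoid_def)
    then have "in_vertex_monoid (\<lambda>v. opp (M v)) E v (rev a)"
      using h.unit_left[of "rev a" c v] assms(5,6) by (simp add: word_rev)
    then obtain m' where m': "m' \<in> carrier (M v)" "gp_eq (\<lambda>v. opp (M v)) E (rev a) [(v,m')]"
      by (auto simp: in_vertex_monoid_def)
    have "gp_eq (\<lambda>v. opp (opp (M v))) E (rev (rev a)) [(v,m')]"
      using gp_rev[OF assms(2) m'(2)] by simp
    then show "in_vertex_monoid M E v a" using m'(1) by (auto simp: in_vertex_monoid_def)
  qed
qed

end
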